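(* There exist universal constants $0<c\le C$ such that for all integers $n\ge k\ge 2$ and $r\ge 0$, \[ c\,k(\log(n/k)+r+1)\le \mathsf{opt}_{\operatorname{bandit}}^{\operatorname{det}}(n,k,r)\le C\,k(\log(n/k)+r+1). \]
   Context: Prediction with expert advice: $\mathcal{Y}=\{1,\dots,k\}$, $\mathcal{X}=[k]^n$, experts $h_i(x)=x_i$ for $i=1,\dots,n$. For $r\ge 0$ let $\mathcal{P}_r$ be the set of finite sequences of examples in $\mathcal{X}\times\mathcal{Y}$ on which some $h_i$ errs ($h_i(x)\ne y$) on at most $r$ examples. Online learning with bandit feedback: in rounds $t=1,2,\dots$ the adversary presents $x_t$, a deterministic learner predicts $\hat y_t$ as a function of past observations and $x_t$, and observes only whether $\hat y_t$ equals the true label $y_t$; a mistake is $\hat y_t\ne y_t$. $\mathsf{opt}_{\operatorname{bandit}}^{\operatorname{det}}(n,k,r)$ is the infimum over deterministic learners of the supremum over sequences $S\in\mathcal{P}_r$ of the number of mistakes (equivalently, over adversaries whose bandit feedback is consistent with some expert being inconsistent with the feedback in at most $r$ rounds). *)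

theory Defs
  imports Complex_Main "HOL-Library.Extended_Nat"
begin

text \<open>Instances x in [k]^n are lists of length n with entries in {1..k};
 labels are in {1..k}.  Expert i (i < n) predicts x ! i.\<close>

type_synonym inst = "nat list"
type_synonym example = "inst \<times> nat"

text \<open>History of a bandit learner: triples (x_s, prediction, feedback "prediction = label").\<close>
type_synonym history = "(inst \<times> nat \<times> bool) list"

type_synonym learner = "history \<Rightarrow> inst \<Rightarrow> nat"

definition valid_example :: "nat \<Rightarrow> nat \<Rightarrow> example \<Rightarrow> bool" where
  "valid_example n k e \<longleftrightarrow> length (fst e) = n \<and> set (fst e) \<subseteq> {1..k} \<and> snd e \<in> {1..k}"

definition expert_errors :: "nat \<Rightarrow> example list \<Rightarrow> nat" where
  "expert_errors i S = length (filter (\<lambda>(x, y). x ! i \<noteq> y) S)"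

definition P_seqs :: "nat \<Rightarrow> nat \<Rightarrow> nat \<Rightarrow> example list set" where
  "P_seqs n k r = {S. (\<forall>e\<in>set S. valid_example n k e) \<and> (\<exists>i<n. expert_errors i S \<le> r)}"

fun bandit_mistakes :: "learner \<Rightarrow> history \<Rightarrow> example list \<Rightarrow> nat" where
  "bandit_mistakes L h [] = 0"
| "bandit_mistakes L h ((x, y) # S) =
     (let p = L h x in (if p \<noteq> y then 1 else 0) + bandit_mistakes L (h @ [(x, p, p = y)]) S)"

definition opt_bandit_det :: "nat \<Rightarrow> nat \<Rightarrow> nat \<Rightarrow> enat" where
  "opt_bandit_det n k r =
     (INF L :: learner. SUP S \<in> P_seqs n k r. enat (bandit_mistakes L [] S))"

end

theory Submission
  imports Defs
begin


definition kerr :: "nat \<Rightarrow> history \<Rightarrow> nat" where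
  "kerr i h = length (filter (\<lambda>(x,p,b). (x!i = p) \<noteq> b) h)"

definition wt :: "nat \<Rightarrow> nat \<Rightarrow> nat" where "wt r e = (if e \<le> r then 2^(r+1-e) else 0)"
definition lv :: "nat \<Rightarrow> nat \<Rightarrow> nat" where "lv r e = r + 1 - e"

definition Wsum :: "nat \<Rightarrow> nat \<Rightarrow> history \<Rightarrow> nat" where
  "Wsum n r h = (\<Sum>i<n. wt r (kerr i h))"
definition Lsum :: "nat \<Rightarrow> nat \<Rightarrow> history \<Rightarrow> nat" where
  "Lsum n r h = (\<Sum>i<n. lv r (kerr i h))"
definition Wgrp :: "nat \<Rightarrow> nat \<Rightarrow> history \<Rightarrow> inst \<Rightarrow> nat \<Rightarrow> nat" where
  "Wgrp n r h x v = (\<Sum>i<n. if x!i = v then wt r (kerr i h) else 0)"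
definition lrn :: "nat \<Rightarrow> nat \<Rightarrow> nat \<Rightarrow> learner" where
  "lrn n k r h x = (SOME v. v \<in> {1..k} \<and> (\<forall>v'\<in>{1..k}. Wgrp n r h x v' \<le> Wgrp n r h x v))"

lemma lrn_spec:
  assumes "1 \<le> k"
  shows "lrn n k r h x \<in> {1..k} \<and> (\<forall>v'\<in>{1..k}. Wgrp n r h x v' \<le> Wgrp n r h x (lrn n k r h x))"
proof -
  let ?f = "Wgrp n r h x"
  have fin: "finite (?f ` {1..k})" and ne: "?f ` {1..k} \<noteq> {}" using assms by auto
  obtain v where v: "v \<in> {1..k}" "?f v = Max (?f ` {1..k})" using Max_in[OF fin ne] by auto
  have "\<forall>v'\<in>{1..k}. ?f v' \<le> ?f v" using v(2) fin by auto
  with v(1) have "\<exists>v. v \<in> {1..k} \<and> (\<forall>v'\<in>{1..k}. ?f v' \<le> ?f v)" by blast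
  then show ?thesis unfolding lrn_def by (rule someI_ex)
qed

lemma kerr_snoc: "kerr i (h @ [(x,p,b)]) = kerr i h + (if (x!i = p) \<noteq> b then 1 else 0)"
  by (simp add: kerr_def)

lemma kerr_nil: "kerr i [] = 0" by (simp add: kerr_def)

lemma wt_mono: "e \<le> e' \<Longrightarrow> wt r e' \<le> wt r e"
  by (auto simp: wt_def intro: power_increasing)

lemma wt_suc: "2 * wt r (Suc e) \<le> wt r e"
  by (auto simp: wt_def Suc_diff_le)

lemma two_mul_le_pow: "2 * m \<le> (2::nat) ^ m"
proof (induction m)
  case (Suc m)
  then show ?case by (cases m) auto
qed simp

lemma lv_le_wt: "2 * lv r e \<le> wt r e"
  using two_mul_le_pow[of "r+1-e"] by (auto simp: wt_def lv_def)

lemma wt_pos: "e \<le> r \<Longrightarrow> 1 \<le> wt r e" by (simp add: wt_def)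

lemma lv_mono: "e \<le> e' \<Longrightarrow> lv r e' \<le> lv r e" by (simp add: lv_def)

lemma lv_suc: "e \<le> r \<Longrightarrow> lv r (Suc e) < lv r e" by (simp add: lv_def)

lemma wt_pos_le: "0 < wt r e \<Longrightarrow> e \<le> r" by (simp add: wt_def split: if_splits)

definition validx :: "nat \<Rightarrow> nat \<Rightarrow> inst \<Rightarrow> bool" where
  "validx n k x \<longleftrightarrow> length x = n \<and> set x \<subseteq> {1..k}"

lemma sum_Wgrp:
  assumes "validx n k x"
  shows "(\<Sum>v\<in>{1..k}. Wgrp n r h x v) = Wsum n r h"
proof -
  have "(\<Sum>v\<in>{1..k}. Wgrp n r h x v) = (\<Sum>i<n. \<Sum>v\<in>{1..k}. if x!i = v then wt r (kerr i h) else 0)"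
    unfolding Wgrp_def by (rule sum.swap)
  also have "\<dots> = (\<Sum>i<n. if x!i \<in> {1..k} then wt r (kerr i h) else 0)"
    by (simp add: sum.delta')
  also have "\<dots> = Wsum n r h" unfolding Wsum_def
    using assms by (intro sum.cong) (auto simp: validx_def dest!: nth_mem)
  finally show ?thesis .
qed

lemma Wsum_le_grp:
  assumes "validx n k x" "1 \<le> k"
  shows "Wsum n r h \<le> k * Wgrp n r h x (lrn n k r h x)"
proof -
  have "Wsum n r h = (\<Sum>v\<in>{1..k}. Wgrp n r h x v)" using sum_Wgrp[OF assms(1)] by simp
  also have "\<dots> \<le> (\<Sum>v\<in>{1..k}. Wgrp n r h x (lrn n k r h x))"
    using lrn_spec[OF assms(2)] by (intro sum_mono) auto
  also have "\<dots> = k * Wgrp n r h x (lrn n k r h x)" by simp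
  finally show ?thesis .
qed

lemma kerr_mono: "kerr i h \<le> kerr i (h @ [e])"
  by (cases e) (simp add: kerr_snoc)

lemma Wsum_mono: "Wsum n r (h @ [e]) \<le> Wsum n r h"
  unfolding Wsum_def by (intro sum_mono wt_mono kerr_mono)

lemma Lsum_mono: "Lsum n r (h @ [e]) \<le> Lsum n r h"
  unfolding Lsum_def by (intro sum_mono lv_mono kerr_mono)

lemma Lsum_le_Wsum: "2 * Lsum n r h \<le> Wsum n r h"
  unfolding Lsum_def Wsum_def sum_distrib_left by (intro sum_mono lv_le_wt)

lemma Wsum_mis:
  assumes "validx n k x" "1 \<le> k"
  shows "2 * k * Wsum n r (h @ [(x, lrn n k r h x, False)]) + Wsum n r h \<le> 2 * k * Wsum n r h"
proof -
  let ?p = "lrn n k r h x"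
  let ?h = "h @ [(x, ?p, False)]"
  have pt: "2 * wt r (kerr i ?h) + (if x!i = ?p then wt r (kerr i h) else 0) \<le> 2 * wt r (kerr i h)" for i
    using wt_suc[of r "kerr i h"] by (simp add: kerr_snoc)
  have "2 * Wsum n r ?h + Wgrp n r h x ?p \<le> 2 * Wsum n r h"
    unfolding Wsum_def Wgrp_def sum_distrib_left sum.distrib[symmetric]
    by (intro sum_mono pt)
  moreover have "Wsum n r h \<le> k * Wgrp n r h x ?p" by (rule Wsum_le_grp[OF assms])
  ultimately have "k * (2 * Wsum n r ?h + Wgrp n r h x ?p) \<le> k * (2 * Wsum n r h)" by simp
  then show ?thesis using \<open>Wsum n r h \<le> k * Wgrp n r h x ?p\<close>
    by (simp add: algebra_simps)
qed

lemma Lsum_mis: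
  assumes "validx n k x" "1 \<le> k" "0 < Wsum n r h"
  shows "Lsum n r (h @ [(x, lrn n k r h x, False)]) < Lsum n r h"
proof -
  let ?p = "lrn n k r h x"
  let ?h = "h @ [(x, ?p, False)]"
  have "0 < Wgrp n r h x ?p"
  proof (rule ccontr)
    assume "\<not> 0 < Wgrp n r h x ?p"
    then have "Wgrp n r h x ?p = 0" by simp
    with Wsum_le_grp[OF assms(1,2), of r h] assms(3) show False by simp
  qed
  have "\<exists>i<n. x!i = ?p \<and> 0 < wt r (kerr i h)"
  proof (rule ccontr)
    assume "\<not> (\<exists>i<n. x!i = ?p \<and> 0 < wt r (kerr i h))"
    then have "Wgrp n r h x ?p = 0" unfolding Wgrp_def by (intro sum.neutral) auto
    with \<open>0 < Wgrp n r h x ?p\<close> show False by simp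
  qed
  then obtain i where i: "i < n" "x!i = ?p" "0 < wt r (kerr i h)" by blast
  show ?thesis unfolding Lsum_def
  proof (rule sum_strict_mono_ex1)
    show "\<forall>j\<in>{..<n}. lv r (kerr j ?h) \<le> lv r (kerr j h)" by (auto intro: lv_mono kerr_mono)
    show "\<exists>j\<in>{..<n}. lv r (kerr j ?h) < lv r (kerr j h)"
      using i wt_pos_le[OF i(3)] by (intro bexI[of _ i]) (auto simp: kerr_snoc intro: lv_suc)
  qed simp
qed


definition Fp :: "real \<Rightarrow> real \<Rightarrow> real \<Rightarrow> real" where
  "Fp k W L = (if k \<le> W then k + 1 + 2 * k * ln (W / k) else L)"

lemma Fp_nonneg: "0 < k \<Longrightarrow> 0 \<le> L \<Longrightarrow> 0 \<le> Fp k W L"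
  by (simp add: Fp_def)

lemma Fp_mono:
  assumes "2 \<le> k" "W' \<le> W" "L' \<le> L" "2 * L' \<le> W'"
  shows "Fp k W' L' \<le> Fp k W L"
proof (cases "k \<le> W'")
  case True
  then have "ln (W' / k) \<le> ln (W / k)" using assms by (simp add: divide_right_mono)
  then show ?thesis using True assms by (simp add: Fp_def)
next
  case False
  show ?thesis
  proof (cases "k \<le> W")
    case True
    have "0 \<le> ln (W / k)" using True assms by simp
    then have "0 \<le> 2 * k * ln (W / k)" using assms by simp
    moreover have "Fp k W' L' = L'" "Fp k W L = k + 1 + 2 * k * ln (W / k)"
      using True False by (simp_all add: Fp_def)
    ultimately show ?thesis using assms False by linarith
  next
    case False
    then show ?thesis using \<open>\<not> k \<le> W'\<close> assms by (simp add: Fp_def)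
  qed
qed

lemma Fp_mis:
  assumes "2 \<le> k" "0 \<le> W'" "2 * k * W' + W \<le> 2 * k * W" "L' + 1 \<le> L" "2 * L' \<le> W'" "1 \<le> W"
  shows "Fp k W' L' + 1 \<le> Fp k W L"
proof (cases "k \<le> W'")
  case True
  have Wp: "0 < W'" using True assms by simp
  have "2 * k * W' \<le> 2 * k * W" using assms by linarith
  then have Wle: "W' \<le> W" using assms by simp
  have "W' / W \<le> 1 - 1 / (2 * k)"
    using assms by (simp add: field_simps)
  moreover have "ln (W' / W) \<le> W' / W - 1" using Wp assms by (intro ln_le_minus_one) simp
  ultimately have "ln (W' / W) \<le> - 1 / (2 * k)" by simp
  then have "ln W' - ln W \<le> - 1 / (2 * k)" using Wp assms by (simp add: ln_div)
  then have "2 * k * (ln W' - ln W) \<le> -1" using assms by (simp add: field_simps)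
  moreover have "ln (W' / k) = ln W' - ln k" "ln (W / k) = ln W - ln k"
    using Wp assms by (simp_all add: ln_div)
  ultimately have "2 * k * ln (W' / k) + 1 \<le> 2 * k * ln (W / k)"
    by (simp add: right_diff_distrib)
  moreover have "Fp k W' L' = k + 1 + 2 * k * ln (W' / k)" "Fp k W L = k + 1 + 2 * k * ln (W / k)"
    using True Wle by (simp_all add: Fp_def)
  ultimately show ?thesis by linarith
next
  case False
  show ?thesis
  proof (cases "k \<le> W")
    case True
    have "0 \<le> ln (W / k)" using True assms by simp
    then have "0 \<le> 2 * k * ln (W / k)" using assms by simp
    moreover have "Fp k W' L' = L'" "Fp k W L = k + 1 + 2 * k * ln (W / k)"
      using True False by (simp_all add: Fp_def)
    ultimately show ?thesis using assms False by linarith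
  next
    case False
    have "2 * k * W' \<le> 2 * k * W" using assms by linarith
    then have "W' \<le> W" using assms by simp
    then show ?thesis using \<open>\<not> k \<le> W\<close> assms by (simp add: Fp_def)
  qed
qed

definition Fpot :: "nat \<Rightarrow> nat \<Rightarrow> nat \<Rightarrow> history \<Rightarrow> real" where
  "Fpot n k r h = Fp (real k) (real (Wsum n r h)) (real (Lsum n r h))"

lemma Wsum_pos: "i < n \<Longrightarrow> kerr i h \<le> r \<Longrightarrow> 1 \<le> Wsum n r h"
  unfolding Wsum_def using wt_pos[of "kerr i h" r]
  by (meson finite_lessThan lessThan_iff member_le_sum order_trans zero_le)

lemma ub_main:
  assumes k: "2 \<le> k"
  shows "(\<forall>e\<in>set S. valid_example n k e) \<Longrightarrow> (\<exists>i<n. kerr i h + expert_errors i S \<le> r) \<Longrightarrow>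
    real (bandit_mistakes (lrn n k r) h S) \<le> Fpot n k r h"
proof (induction S arbitrary: h)
  case Nil
  then show ?case using k by (simp add: Fpot_def Fp_nonneg)
next
  case (Cons e S)
  obtain x y where e: "e = (x, y)" by (cases e)
  obtain i where i: "i < n" "kerr i h + expert_errors i ((x,y) # S) \<le> r" using Cons.prems e by blast
  have vx: "validx n k x" using Cons.prems e by (simp add: valid_example_def validx_def)
  define p where "p = lrn n k r h x"
  define h' where "h' = h @ [(x, p, p = y)]"
  have ee: "expert_errors i ((x,y) # S) = (if x!i \<noteq> y then 1 else 0) + expert_errors i S"
    by (simp add: expert_errors_def)
  have "kerr i h' \<le> kerr i h + (if x!i \<noteq> y then 1 else 0)"
    by (auto simp: h'_def kerr_snoc)
  then have "\<exists>i<n. kerr i h' + expert_errors i S \<le> r" using i ee by (intro exI[of _ i]) auto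
  then have IH: "real (bandit_mistakes (lrn n k r) h' S) \<le> Fpot n k r h'"
    using Cons by simp
  have bm: "bandit_mistakes (lrn n k r) h ((x,y) # S) = (if p \<noteq> y then 1 else 0) + bandit_mistakes (lrn n k r) h' S"
    by (simp add: p_def h'_def Let_def)
  have W1: "1 \<le> Wsum n r h" using i by (intro Wsum_pos[of i]) auto
  have step: "Fpot n k r h' + (if p \<noteq> y then 1 else 0) \<le> Fpot n k r h"
  proof (cases "p = y")
    case True
    have "Fpot n k r h' \<le> Fpot n k r h" unfolding Fpot_def
      using k Wsum_mono[of n r h] Lsum_mono[of n r h] Lsum_le_Wsum[of n r h']
      by (intro Fp_mono) (simp_all add: h'_def)
    then show ?thesis using True by simp
  next
    case False
    have h'': "h' = h @ [(x, lrn n k r h x, False)]" using False by (simp add: h'_def p_def)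
    have a: "2 * k * Wsum n r h' + Wsum n r h \<le> 2 * k * Wsum n r h"
      using Wsum_mis[OF vx, of r h] k h'' by simp
    have b: "Lsum n r h' + 1 \<le> Lsum n r h"
      using Lsum_mis[OF vx, of r h] k h'' W1 by simp
    have "Fpot n k r h' + 1 \<le> Fpot n k r h" unfolding Fpot_def
    proof (rule Fp_mis)
      show "2 * real k * real (Wsum n r h') + real (Wsum n r h) \<le> 2 * real k * real (Wsum n r h)"
        using a by (metis of_nat_add of_nat_le_iff of_nat_mult of_nat_numeral)
      show "real (Lsum n r h') + 1 \<le> real (Lsum n r h)" using b by linarith
      show "2 * real (Lsum n r h') \<le> real (Wsum n r h')" using Lsum_le_Wsum[of n r h'] by linarith
    qed (use k W1 in auto)
    then show ?thesis using False by simp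
  qed
  have "real (bandit_mistakes (lrn n k r) h ((x,y) # S)) \<le> (if p \<noteq> y then 1 else 0) + Fpot n k r h'"
    using bm IH by (cases "p = y") simp_all
  then show ?case using step unfolding e by linarith
qed

lemma Wsum_nil: "Wsum n r [] = n * 2^(r+1)" by (simp add: Wsum_def kerr_nil wt_def)
lemma Lsum_nil: "Lsum n r [] = n * (r+1)" by (simp add: Lsum_def kerr_nil lv_def)

lemma ub_bound:
  assumes "2 \<le> k" "k \<le> n" "S \<in> P_seqs n k r"
  shows "real (bandit_mistakes (lrn n k r) [] S) \<le> 4 * real k * (ln (real n / real k) + real r + 1)"
proof -
  have "real (bandit_mistakes (lrn n k r) [] S) \<le> Fpot n k r []"
    using assms(3) by (intro ub_main[OF assms(1)]) (auto simp: P_seqs_def kerr_nil)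
  also have "\<dots> = real k + 1 + 2 * real k * ln (real n * 2^(r+1) / real k)"
  proof -
    have "(1::real) \<le> 2^(r+1)" by (rule one_le_power) simp
    then have "real n * 1 \<le> real n * 2^(r+1)" by (intro mult_left_mono) auto
    then have "real k \<le> real n * 2^(r+1)" using assms by linarith
    then show ?thesis by (simp add: Fpot_def Fp_def Wsum_nil)
  qed
  also have "ln (real n * 2^(r+1) / real k) = ln (real n / real k) + (real r + 1) * ln 2"
    using assms by (simp add: ln_mult ln_div ln_realpow algebra_simps)
  also have "real k + 1 + 2 * real k * (ln (real n / real k) + (real r + 1) * ln 2)
      \<le> 4 * real k * (ln (real n / real k) + real r + 1)"
  proof -
    have a: "0 \<le> ln (real n / real k)" using assms by simp
    have l2: "ln (2::real) \<le> 1" using ln_2_less_1 by simp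
    define P where "P = real k * (real r + 1)"
    have P1: "P * ln 2 \<le> P" using l2 by (simp add: P_def mult_left_le)
    have "real k * 1 \<le> real k * (real r + 1)" by (intro mult_left_mono) auto
    then have P2: "real k \<le> P" by (simp add: P_def)
    have "0 \<le> real k * ln (real n / real k)" using a by simp
    define A where "A = real k * ln (real n / real k)"
    have A0: "0 \<le> A" using a by (simp add: A_def)
    have e1: "2 * real k * (ln (real n / real k) + (real r + 1) * ln 2) = 2 * A + 2 * (P * ln 2)"
      by (simp add: A_def P_def algebra_simps)
    have e2: "4 * real k * (ln (real n / real k) + real r + 1) = 4 * A + 4 * P"
      by (simp add: A_def P_def algebra_simps)
    have k2: "2 \<le> real k" using assms(1) by simp
    show ?thesis unfolding e1 e2 using P1 P2 A0 k2 by linarith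
  qed
  finally show ?thesis .
qed



fun hist :: "(history \<Rightarrow> inst) \<Rightarrow> learner \<Rightarrow> nat \<Rightarrow> history" where
  "hist X L 0 = []"
| "hist X L (Suc t) = hist X L t @ [(X (hist X L t), L (hist X L t) (X (hist X L t)), False)]"

fun wfh :: "learner \<Rightarrow> history \<Rightarrow> history \<Rightarrow> bool" where
  "wfh L h [] = True"
| "wfh L h ((x,p,b)#ts) = (p = L h x \<and> \<not>b \<and> wfh L (h@[(x,p,b)]) ts)"

lemma wfh_snoc: "wfh L h (ts @ [(x,p,b)]) = (wfh L h ts \<and> p = L (h@ts) x \<and> \<not> b)"
  by (induction L h ts rule: wfh.induct) auto

lemma wfh_hist: "wfh L [] (hist X L t)"
  by (induction t) (simp_all add: wfh_snoc)

lemma length_hist: "length (hist X L t) = t"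
  by (induction t) simp_all

lemma hist_set: "(x,p,b) \<in> set (hist X L t) \<Longrightarrow> \<exists>h. x = X h"
  by (induction t) auto

definition lab :: "nat \<Rightarrow> inst \<Rightarrow> nat \<Rightarrow> nat" where
  "lab i x p = (if x!i \<noteq> p then x!i else if p = 1 then 2 else 1)"

lemma lab_ne: "lab i x p \<noteq> p" by (simp add: lab_def)

definition mkseq :: "nat \<Rightarrow> history \<Rightarrow> example list" where
  "mkseq i ts = map (\<lambda>(x,p,b). (x, lab i x p)) ts"

lemma mistakes_mkseq: "wfh L h ts \<Longrightarrow> bandit_mistakes L h (mkseq i ts) = length ts"
proof (induction L h ts rule: wfh.induct)
  case (2 L h x p b ts)
  then have pb: "p = L h x" "b = False" "wfh L (h @ [(x, p, b)]) ts" by auto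
  have "lab i x p \<noteq> p" by (simp add: lab_ne)
  with pb 2(1) show ?case by (simp add: mkseq_def Let_def)
qed (simp add: mkseq_def)

definition hits :: "nat \<Rightarrow> history \<Rightarrow> nat" where
  "hits i h = length (filter (\<lambda>(x,p,b). x!i = p) h)"

lemma hits_snoc: "hits i (h @ [(x,p,b)]) = hits i h + (if x!i = p then 1 else 0)"
  by (simp add: hits_def)

lemma errors_mkseq: "expert_errors i (mkseq i ts) = hits i ts"
  by (induction ts) (auto simp: expert_errors_def hits_def mkseq_def lab_def split: if_splits)

lemma lb_generic:
  assumes valid: "\<And>h. length (X h) = n \<and> set (X h) \<subseteq> {1..k}"
    and k: "2 \<le> k" and i: "i < n" and hr: "hits i (hist X L T) \<le> r"
  shows "\<exists>S\<in>P_seqs n k r. bandit_mistakes L [] S = T"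
proof (intro bexI)
  let ?S = "mkseq i (hist X L T)"
  show "bandit_mistakes L [] ?S = T"
    using mistakes_mkseq[OF wfh_hist] length_hist by simp
  have "valid_example n k e" if "e \<in> set ?S" for e
  proof -
    obtain x p b where xp: "(x,p,b) \<in> set (hist X L T)" "e = (x, lab i x p)"
      using \<open>e \<in> set ?S\<close> unfolding mkseq_def by auto
    obtain h where "x = X h" using hist_set[OF xp(1)] by blast
    then have vx: "length x = n" "set x \<subseteq> {1..k}" using valid by auto
    have "x ! i \<in> {1..k}" using vx i nth_mem by fastforce
    then have "lab i x p \<in> {1..k}" using k by (auto simp: lab_def)
    then show ?thesis using vx xp by (simp add: valid_example_def)
  qed
  moreover have "expert_errors i ?S \<le> r" using hr by (simp add: errors_mkseq)
  ultimately show "?S \<in> P_seqs n k r" using i unfolding P_seqs_def by blast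
qed


definition x0 :: "nat \<Rightarrow> nat \<Rightarrow> inst" where "x0 n k = map (\<lambda>j. min (j+1) k) [0..<n]"

lemma x0_valid: "1 \<le> k \<Longrightarrow> length (x0 n k) = n \<and> set (x0 n k) \<subseteq> {1..k}"
  by (auto simp: x0_def)

lemma x0_nth: "j < k \<Longrightarrow> k \<le> n \<Longrightarrow> x0 n k ! j = j + 1"
  by (simp add: x0_def)

lemma sum_indic_le1: "(\<Sum>j<k. if x0 n k ! j = p then 1 else 0) \<le> (1::nat)" if "k \<le> n"
proof -
  have "(\<Sum>j<k. if x0 n k ! j = p then 1 else 0) \<le> (\<Sum>j<k. if j = p - 1 then 1 else (0::nat))"
    using that by (intro sum_mono) (auto simp: x0_nth)
  also have "\<dots> \<le> 1" by (simp add: sum.delta)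
  finally show ?thesis .
qed

lemma sum_hits: "k \<le> n \<Longrightarrow> \<forall>e\<in>set h. fst e = x0 n k \<Longrightarrow> (\<Sum>j<k. hits j h) \<le> length h"
proof (induction h)
  case Nil
  then show ?case by (simp add: hits_def)
next
  case (Cons e h)
  obtain x p b where e: "e = (x,p,b)" by (cases e)
  have x: "x = x0 n k" using Cons.prems e by simp
  have "(\<Sum>j<k. hits j (e # h)) = (\<Sum>j<k. (if x0 n k ! j = p then 1 else 0) + hits j h)"
    using e x by (intro sum.cong) (auto simp: hits_def)
  also have "\<dots> = (\<Sum>j<k. if x0 n k ! j = p then 1 else 0) + (\<Sum>j<k. hits j h)"
    by (rule sum.distrib)
  also have "\<dots> \<le> 1 + length h" using sum_indic_le1[OF Cons.prems(1), of p] Cons by force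
  finally show ?case by simp
qed

lemma hist_fst: "e \<in> set (hist X L t) \<Longrightarrow> \<exists>h. fst e = X h"
  using hist_set[of "fst e" "fst (snd e)" "snd (snd e)" X L t] by simp

lemma lbA:
  assumes "2 \<le> k" "k \<le> n"
  shows "\<exists>S\<in>P_seqs n k r. bandit_mistakes L [] S = k*(r+1) - 1"
proof -
  let ?X = "\<lambda>_::history. x0 n k"
  let ?T = "k*(r+1) - 1"
  have "\<exists>j<k. hits j (hist ?X L ?T) \<le> r"
  proof (rule ccontr)
    assume "\<not> (\<exists>j<k. hits j (hist ?X L ?T) \<le> r)"
    then have "\<forall>j<k. r + 1 \<le> hits j (hist ?X L ?T)" by auto
    then have "(\<Sum>j<k. r + 1) \<le> (\<Sum>j<k. hits j (hist ?X L ?T))" by (intro sum_mono) auto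
    also have "\<dots> \<le> length (hist ?X L ?T)"
      using assms hist_fst[of _ ?X L ?T] by (intro sum_hits) auto
    also have "\<dots> = ?T" by (rule length_hist)
    finally have A: "(\<Sum>j<k. r + 1) \<le> ?T" .
    have "(\<Sum>j<k. r + 1) = k * (r+1)" by simp
    moreover have "1 \<le> k * (r+1)" using assms by simp
    ultimately show False using A by linarith
  qed
  then obtain j where j: "j < k" "hits j (hist ?X L ?T) \<le> r" by blast
  show ?thesis
    using assms j x0_valid[of k n] by (intro lb_generic[of ?X n k j]) auto
qed


definition Vs :: "nat \<Rightarrow> history \<Rightarrow> nat set" where "Vs n h = {i. i < n \<and> hits i h = 0}"
definition rank :: "nat set \<Rightarrow> nat \<Rightarrow> nat" where "rank A i = card {j\<in>A. j < i}"
definition XB :: "nat \<Rightarrow> nat \<Rightarrow> history \<Rightarrow> inst" where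
  "XB n k h = map (\<lambda>i. if i \<in> Vs n h then rank (Vs n h) i mod k + 1 else 1) [0..<n]"

lemma finite_Vs: "finite (Vs n h)" by (simp add: Vs_def)

lemma rank_mono: "finite A \<Longrightarrow> i \<in> A \<Longrightarrow> i < j \<Longrightarrow> rank A i < rank A j"
  unfolding rank_def by (rule psubset_card_mono) auto

lemma rank_lt: "finite A \<Longrightarrow> i \<in> A \<Longrightarrow> rank A i < card A"
  unfolding rank_def by (rule psubset_card_mono) auto

lemma rank_inj: assumes "finite A" shows "inj_on (rank A) A"
proof (rule inj_onI)
  fix a b assume "a \<in> A" "b \<in> A" "rank A a = rank A b"
  then show "a = b" using assms rank_mono[of A a b] rank_mono[of A b a]
    by (cases a b rule: linorder_cases) auto
qed

lemma count_mod:
  assumes "0 < k"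
  shows "k * card {m. m < s \<and> m mod k = c} \<le> s + k - 1"
proof -
  have inj: "inj_on (\<lambda>m. m div k) {m. m < s \<and> m mod k = c}"
  proof (rule inj_onI)
    fix a b assume a: "a \<in> {m. m < s \<and> m mod k = c}" and b: "b \<in> {m. m < s \<and> m mod k = c}"
      and e: "a div k = b div k"
    have ha: "a = a div k * k + c" using a div_mult_mod_eq[of a k] by simp
    have hb: "b = b div k * k + c" using b div_mult_mod_eq[of b k] by simp
    have "a = b div k * k + c" using ha e by simp
    then show "a = b" using hb by linarith
  qed
  have sub: "(\<lambda>m. m div k) ` {m. m < s \<and> m mod k = c} \<subseteq> {..< (s + k - 1) div k}"
  proof
    fix q assume "q \<in> (\<lambda>m. m div k) ` {m. m < s \<and> m mod k = c}"
    then obtain m where m: "m < s" "q = m div k" by auto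
    have "q * k \<le> m" using m by (simp add: div_times_less_eq_dividend)
    then have "q * k + k \<le> s + k - 1" using m by linarith
    then have "(q + 1) * k \<le> s + k - 1" by (simp add: algebra_simps)
    then have "q + 1 \<le> (s + k - 1) div k" using assms
      by (metis div_le_mono nonzero_mult_div_cancel_right not_gr0)
    then show "q \<in> {..< (s + k - 1) div k}" by simp
  qed
  have "card {m. m < s \<and> m mod k = c} \<le> (s + k - 1) div k"
    using card_inj_on_le[OF inj sub] by simp
  then have "k * card {m. m < s \<and> m mod k = c} \<le> k * ((s + k - 1) div k)" by simp
  also have "\<dots> \<le> s + k - 1" by (simp add: mult.commute div_times_less_eq_dividend)
  finally show ?thesis .
qed

lemma count_grp:
  assumes "finite A" "0 < k"
  shows "k * card {i\<in>A. rank A i mod k + 1 = p} \<le> card A + k - 1"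
proof -
  have "card {i\<in>A. rank A i mod k + 1 = p} = card (rank A ` {i\<in>A. rank A i mod k + 1 = p})"
    using rank_inj[OF assms(1)] by (intro card_image[symmetric]) (auto intro: inj_on_subset)
  also have "\<dots> \<le> card {m. m < card A \<and> m mod k = p - 1}"
    using rank_lt[OF assms(1)] by (intro card_mono) auto
  finally have "k * card {i\<in>A. rank A i mod k + 1 = p} \<le> k * card {m. m < card A \<and> m mod k = p - 1}"
    by simp
  also have "\<dots> \<le> card A + k - 1" by (rule count_mod[OF assms(2)])
  finally show ?thesis .
qed

lemma XB_valid: "1 \<le> k \<Longrightarrow> length (XB n k h) = n \<and> set (XB n k h) \<subseteq> {1..k}"
  by (auto simp: XB_def Suc_le_eq)

lemma XB_nth: "i \<in> Vs n h \<Longrightarrow> XB n k h ! i = rank (Vs n h) i mod k + 1"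
  by (auto simp: XB_def Vs_def)

lemma Vs_step:
  fixes L :: learner and n k t :: nat
  defines "h \<equiv> hist (XB n k) L t"
  defines "x \<equiv> XB n k h"
  defines "p \<equiv> L h x"
  shows "Vs n (hist (XB n k) L (Suc t)) = {i\<in>Vs n h. x!i \<noteq> p}"
  by (auto simp: h_def x_def p_def Vs_def hits_snoc split: if_splits)

lemma card_step:
  fixes L :: learner
  assumes "2 \<le> k"
  shows "real (k-1) * (real (card (Vs n (hist (XB n k) L t))) + k)
     \<le> real k * (real (card (Vs n (hist (XB n k) L (Suc t)))) + k)"
proof -
  define h where "h = hist (XB n k) L t"
  define x where "x = XB n k h"
  define p where "p = L h x"
  define A where "A = Vs n h"
  define G where "G = {i\<in>A. rank A i mod k + 1 = p}"
  have V': "Vs n (hist (XB n k) L (Suc t)) = {i\<in>A. x!i \<noteq> p}"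
    unfolding A_def h_def x_def p_def by (rule Vs_step)
  have G: "G = {i\<in>A. x!i = p}" unfolding G_def x_def A_def by (auto simp: XB_nth)
  have fA: "finite A" by (simp add: A_def finite_Vs)
  have "A = {i\<in>A. x!i \<noteq> p} \<union> G" "{i\<in>A. x!i \<noteq> p} \<inter> G = {}" using G by auto
  then have cA: "card A = card {i\<in>A. x!i \<noteq> p} + card G"
    using fA by (metis card_Un_disjoint finite_Un)
  have cG: "k * card G \<le> card A + k - 1" unfolding G_def using fA assms by (intro count_grp) auto
  define s where "s = card A"
  define s' where "s' = card {i\<in>A. x!i \<noteq> p}"
  define g where "g = card G"
  have r1: "real k * real g \<le> real s + real k - 1"
  proof -
    have "k * card G + 1 \<le> card A + k" using cG assms by linarith
    then have "real (k * card G + 1) \<le> real (card A + k)" by (rule of_nat_mono)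
    then show ?thesis unfolding s_def g_def by simp
  qed
  have r2: "real s = real s' + real g" using cA unfolding s_def s'_def g_def by simp
  have k1: "real (k - 1) = real k - 1" using assms by simp
  have "real (k-1) * (real s + k) \<le> real k * (real s' + k)"
    unfolding k1 using r1 r2 by (simp add: algebra_simps)
  then show ?thesis using V' unfolding s_def s'_def A_def h_def by simp
qed


lemma growth:
  fixes L :: learner
  assumes "2 \<le> k"
  shows "real (k-1)^t * (real n + k) \<le> real k^t * (real (card (Vs n (hist (XB n k) L t))) + k)"
proof (induction t)
  case 0
  have "Vs n [] = {..<n}" by (auto simp: Vs_def hits_def)
  then show ?case by simp
next
  case (Suc t)
  let ?c = "\<lambda>t. real (card (Vs n (hist (XB n k) L t)))"
  have "real (k-1)^Suc t * (real n + k) = real (k-1) * (real (k-1)^t * (real n + k))" by simp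
  also have "\<dots> \<le> real (k-1) * (real k^t * (?c t + k))"
    by (intro mult_left_mono Suc.IH) simp
  also have "\<dots> = real k^t * (real (k-1) * (?c t + k))" by simp
  also have "\<dots> \<le> real k^t * (real k * (?c (Suc t) + k))"
    by (intro mult_left_mono card_step assms) simp
  also have "\<dots> = real k^Suc t * (?c (Suc t) + k)" by simp
  finally show ?case .
qed

lemma pow_cond:
  assumes k: "2 \<le> k" and n: "k \<le> n" and T: "real T \<le> real k / 2 * ln ((real n + k) / (real k + 1))"
  shows "real k^T * (real k + 1) \<le> real (k-1)^T * (real n + k)"
proof -
  have k1: "real (k-1) = real k - 1" using k by simp
  have kpos: "1 \<le> real k - 1" using k by simp
  have "ln (real k / (real k - 1)) \<le> real k / (real k - 1) - 1"
    using kpos by (intro ln_le_minus_one) simp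
  also have "\<dots> = 1 / (real k - 1)" using kpos by (simp add: field_simps)
  also have "\<dots> \<le> 2 / real k" using k kpos by (simp add: field_simps)
  finally have l1: "ln (real k) - ln (real k - 1) \<le> 2 / real k" using kpos by (simp add: ln_div)
  have "real T * (ln (real k) - ln (real k - 1)) \<le> real T * (2 / real k)"
    using l1 by (intro mult_left_mono) auto
  also have "\<dots> \<le> ln ((real n + k) / (real k + 1))" using T k by (simp add: field_simps)
  also have "\<dots> = ln (real n + k) - ln (real k + 1)" using k by (simp add: ln_div)
  finally have main: "real T * ln (real k) + ln (real k + 1) \<le> real T * ln (real k - 1) + ln (real n + k)"
    by (simp add: algebra_simps)
  have "ln (real k^T * (real k + 1)) = real T * ln (real k) + ln (real k + 1)"
    using k by (simp add: ln_mult ln_realpow)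
  moreover have "ln (real (k-1)^T * (real n + k)) = real T * ln (real k - 1) + ln (real n + k)"
    using kpos k1 k by (simp add: ln_mult ln_realpow)
  ultimately have "ln (real k^T * (real k + 1)) \<le> ln (real (k-1)^T * (real n + k))" using main by simp
  then show ?thesis using kpos k1 k by (subst (asm) ln_le_cancel_iff) auto
qed

lemma lbB:
  fixes L :: learner
  assumes k: "2 \<le> k" and n: "k \<le> n"
  shows "\<exists>T. real k / 2 * ln (real n / real k) - real k \<le> real T \<and>
     (\<exists>S\<in>P_seqs n k r. bandit_mistakes L [] S = T)"
proof -
  define y where "y = real k / 2 * ln ((real n + k) / (real k + 1))"
  define T where "T = nat \<lfloor>y\<rfloor>"
  have q1: "1 \<le> (real n + k) / (real k + 1)" using n k by simp
  have y0: "0 \<le> y" unfolding y_def using q1 by simp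
  have Ty: "real T \<le> y" "y - 1 \<le> real T" unfolding T_def using y0
    by (simp_all add: of_nat_nat)
  have "real k^T * (real k + 1) \<le> real (k-1)^T * (real n + k)"
    using pow_cond[OF k n] Ty(1) unfolding y_def by simp
  also have "\<dots> \<le> real k^T * (real (card (Vs n (hist (XB n k) L T))) + k)"
    by (rule growth[OF k])
  finally have "real k + 1 \<le> real (card (Vs n (hist (XB n k) L T))) + k"
    using k by (subst (asm) mult_le_cancel_left_pos) auto
  then have "Vs n (hist (XB n k) L T) \<noteq> {}" by auto
  then obtain i where i: "i < n" "hits i (hist (XB n k) L T) = 0" unfolding Vs_def by auto
  have ex: "\<exists>S\<in>P_seqs n k r. bandit_mistakes L [] S = T"
    using k i XB_valid[of k n] by (intro lb_generic[of "XB n k" n k i]) auto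
  have f1: "real n \<le> real k * real n" using mult_right_mono[of 1 "real k" "real n"] k by simp
  have f2: "0 \<le> real k * (real k * 2)" by simp
  have "(real n + k) / (real k + 1) \<ge> real n / (2 * real k)" using k n f1 f2
    by (simp add: field_simps) (use f1 f2 in linarith)
  then have "ln ((real n + k) / (real k + 1)) \<ge> ln (real n / (2 * real k))"
    using k n by (subst ln_le_cancel_iff) auto
  also have "ln (real n / (2 * real k)) = ln (real n / real k) - ln 2"
    using k n by (simp add: ln_div ln_mult)
  finally have "ln (real n / real k) - 1 \<le> ln ((real n + k) / (real k + 1))"
    using ln_2_less_1 by linarith
  then have "real k / 2 * (ln (real n / real k) - 1) \<le> y"
    unfolding y_def using k by (intro mult_left_mono) auto
  then have "real k / 2 * ln (real n / real k) - real k \<le> real T"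
    using Ty(2) k by (simp add: algebra_simps)
  then show ?thesis using ex by blast
qed



lemma opt_lower:
  assumes "\<And>L. \<exists>S\<in>P_seqs n k r. B \<le> bandit_mistakes L [] S"
  shows "enat B \<le> opt_bandit_det n k r"
  unfolding opt_bandit_det_def
proof (rule INF_greatest)
  fix L :: learner
  obtain S where S: "S \<in> P_seqs n k r" "B \<le> bandit_mistakes L [] S" using assms by blast
  show "enat B \<le> (SUP S\<in>P_seqs n k r. enat (bandit_mistakes L [] S))"
    using S by (intro SUP_upper2[of S]) auto
qed

lemma main_bound:
  fixes n k r :: nat
  assumes k: "2 \<le> k" and n: "k \<le> n"
  shows "\<exists>m :: nat. opt_bandit_det n k r = enat m \<and>
           1/8 * real k * (ln (real n / real k) + real r + 1) \<le> real m \<and>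
           real m \<le> 4 * real k * (ln (real n / real k) + real r + 1)"
proof -
  define a where "a = ln (real n / real k)"
  have a0: "0 \<le> a" unfolding a_def using k n by simp
  define U where "U = nat \<lfloor>4 * real k * (a + real r + 1)\<rfloor>"
  have "opt_bandit_det n k r \<le> (SUP S\<in>P_seqs n k r. enat (bandit_mistakes (lrn n k r) [] S))"
    unfolding opt_bandit_det_def by (rule INF_lower) simp
  also have "\<dots> \<le> enat U"
  proof (rule SUP_least)
    fix S assume S: "S \<in> P_seqs n k r"
    have "real (bandit_mistakes (lrn n k r) [] S) \<le> 4 * real k * (a + real r + 1)"
      using ub_bound[OF k n S] unfolding a_def .
    then have "bandit_mistakes (lrn n k r) [] S \<le> U" unfolding U_def by (rule le_nat_floor)
    then show "enat (bandit_mistakes (lrn n k r) [] S) \<le> enat U" by simp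
  qed
  finally have up: "opt_bandit_det n k r \<le> enat U" .
  then obtain m where m: "opt_bandit_det n k r = enat m"
    by (cases "opt_bandit_det n k r") auto
  have "m \<le> U" using up m by simp
  have X0: "0 \<le> 4 * real k * (a + real r + 1)" using a0 by simp
  have "real U = real_of_int \<lfloor>4 * real k * (a + real r + 1)\<rfloor>" unfolding U_def using X0 by simp
  then have "real U \<le> 4 * real k * (a + real r + 1)" by simp
  then have mU: "real m \<le> 4 * real k * (a + real r + 1)" using \<open>m \<le> U\<close> by linarith
  have "enat (k*(r+1) - 1) \<le> opt_bandit_det n k r"
  proof (rule opt_lower)
    fix L :: learner
    obtain S where S1: "S \<in> P_seqs n k r" and S2: "bandit_mistakes L [] S = k*(r+1) - 1"
      using lbA[OF k n, where L=L and r=r] by blast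
    show "\<exists>S\<in>P_seqs n k r. k*(r+1) - 1 \<le> bandit_mistakes L [] S"
    proof (rule bexI[of _ S])
      show "k*(r+1) - 1 \<le> bandit_mistakes L [] S" using S2 by simp
      show "S \<in> P_seqs n k r" by (rule S1)
    qed
  qed
  then have mA: "k*(r+1) - 1 \<le> m" using m by simp
  define B where "B = nat \<lceil>real k / 2 * a - real k\<rceil>"
  have "enat B \<le> opt_bandit_det n k r"
  proof (rule opt_lower)
    fix L :: learner
    obtain T where T: "real k / 2 * a - real k \<le> real T" "\<exists>S\<in>P_seqs n k r. bandit_mistakes L [] S = T"
      using lbB[OF k n, where L=L and r=r] unfolding a_def by blast
    have "B \<le> T" unfolding B_def using T(1) by (simp add: nat_ceiling_le_eq)
    then show "\<exists>S\<in>P_seqs n k r. B \<le> bandit_mistakes L [] S" using T(2) by auto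
  qed
  then have "B \<le> m" using m by simp
  moreover have "real k / 2 * a - real k \<le> real B" unfolding B_def by (rule real_nat_ceiling_ge)
  ultimately have mB: "real k / 2 * a - real k \<le> real m" by linarith
  have P1: "1 \<le> k*(r+1)" using k by simp
  have mA': "real (k*(r+1)) - 1 \<le> real m" using mA P1 by linarith
  define P where "P = real k * (real r + 1)"
  define A where "A = real k * a"
  have "real k * 1 \<le> real k * (real r + 1)" by (intro mult_left_mono) auto
  then have Pk: "real k \<le> P" by (simp add: P_def)
  have A0: "0 \<le> A" using a0 by (simp add: A_def)
  have e1: "1/8 * real k * (a + real r + 1) = (A + P) / 8" by (simp add: A_def P_def algebra_simps)
  have e2: "real k / 2 * a = A / 2" by (simp add: A_def)
  have e3: "real (k*(r+1)) = P" by (simp add: P_def algebra_simps)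
  have k2: "2 \<le> real k" using k by simp
  have L1: "1/8 * real k * (ln (real n / real k) + real r + 1) \<le> real m"
  proof -
    have h1: "P - 1 \<le> real m" using mA' unfolding e3 .
    have h2: "A / 2 - real k \<le> real m" using mB unfolding e2 .
    have "A + P \<le> 8 * real m" using h1 h2 Pk A0 k2 by linarith
    then have "(A + P) / 8 \<le> real m" by simp
    then show ?thesis unfolding a_def[symmetric] e1 .
  qed
  have L2: "real m \<le> 4 * real k * (ln (real n / real k) + real r + 1)" using mU unfolding a_def .
  show ?thesis by (intro exI[of _ m] conjI m L1 L2)
qed

theorem theorem4p1:
  "\<exists>c C :: real. 0 < c \<and> c \<le> C \<and>
     (\<forall>n k r :: nat. 2 \<le> k \<and> k \<le> n \<longrightarrow>
        (\<exists>m :: nat. opt_bandit_det n k r = enat m \<and>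
           c * real k * (ln (real n / real k) + real r + 1) \<le> real m \<and>
           real m \<le> C * real k * (ln (real n / real k) + real r + 1)))"
proof -
  have H: "\<forall>n k r :: nat. 2 \<le> k \<and> k \<le> n \<longrightarrow>
        (\<exists>m :: nat. opt_bandit_det n k r = enat m \<and>
           1/8 * real k * (ln (real n / real k) + real r + 1) \<le> real m \<and>
           real m \<le> 4 * real k * (ln (real n / real k) + real r + 1))"
    by (intro allI impI, elim conjE, rule main_bound)
  have c: "0 < (1/8::real)" "(1/8::real) \<le> 4" by simp_all
  show ?thesis
    by (rule exI[of _ "1/8"], rule exI[of _ 4]) (intro conjI c H)
qed

end
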